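(* Let $P$ be a Poisson conformal algebra with $\lambda$-products $(\cdot_\lambda\cdot)$ and $[\cdot_\lambda\cdot]$, and let $L\subseteq P$ be an $H$-submodule closed under $[\cdot_\lambda\cdot]$ (so $L$ is a Lie conformal algebra). Then $P$ is a conformal module over $L$ with respect to $$\langle a_\lambda u\rangle=[a_\lambda u]+\lambda(a_\lambda u),\qquad a\in L,\ u\in P.$$
   Context: $\Bbbk$ is a field of characteristic $0$, $H=\Bbbk[\partial]$. A $\lambda$-product on an $H$-module $C$ is a $\Bbbk$-bilinear map $(x,y)\mapsto(x_\lambda y)=\sum_{n\ge0}\frac{\lambda^n}{n!}(x_{(n)}y)\in C[\lambda]$ satisfying $(\partial x_\lambda y)=-\lambda(x_\lambda y)$, $(x_\lambda\partial y)=(\partial+\lambda)(x_\lambda y)$; $(x_{-\partial-\lambda}y)$ means $\sum_n\frac{(-\partial-\lambda)^n}{n!}(x_{(n)}y)$ with $\partial$ acting on coefficients. A Poisson conformal algebra is an $H$-module $P$ with two $\lambda$-products such that $(\cdot_\lambda\cdot)$ is associative, $(x_\lambda(y_\mu z))=((x_\lambda y)_{\lambda+\mu}z)$, and commutative, $(x_\lambda y)=(y_{-\partial-\lambda}x)$; $[\cdot_\lambda\cdot]$ satisfies $[x_\lambda y]=-[y_{-\partial-\lambda}x]$ and $[x_\lambda[y_\mu z]]-[y_\mu[x_\lambda z]]=[[x_\lambda y]_{\lambda+\mu}z]$; and $[x_\lambda(y_\mu z)]=([x_\lambda y]_{\lambda+\mu}z)+(y_\mu[x_\lambda z])$ for all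 $x,y,z$. A conformal module over a Lie conformal algebra $L$ is an $H$-module $M$ with a $\Bbbk$-bilinear map $L\times M\to M[\lambda]$, $(a,u)\mapsto\langle a_\lambda u\rangle$, such that $\langle\partial a_\lambda u\rangle=-\lambda\langle a_\lambda u\rangle$, $\langle a_\lambda\partial u\rangle=(\partial+\lambda)\langle a_\lambda u\rangle$, and $\langle a_\lambda\langle b_\mu u\rangle\rangle-\langle b_\mu\langle a_\lambda u\rangle\rangle=\langle[a_\lambda b]_{\lambda+\mu}u\rangle$ for all $a,b\in L$, $u\in M$. *)

theory Defs
  imports Complex_Main
begin

text \<open>An H-module
(H = k[d]) is a k-vector space 'p (scalar multiplication sc) together with a k-linear map D
(the action of d).  An element of P[lambda] is represented by its coefficient sequence
nat => 'p (coefficient of lambda^n), finitely supported; an element of P[lambda,mu] by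
nat => nat => 'p (coefficient of lambda^p mu^q).  A lambda-product is represented by
m :: 'p => 'p => nat => 'p, where m x y n is the coefficient of lambda^n in (x_lambda y),
i.e. m x y n = x_(n) y / n!.\<close>

definition fin_supp :: "(nat \<Rightarrow> 'p::zero) \<Rightarrow> bool" where
  "fin_supp f \<longleftrightarrow> finite {n. f n \<noteq> 0}"

text \<open>Multiplication of an element of P[lambda] by lambda.\<close>
definition lshift :: "(nat \<Rightarrow> 'p::zero) \<Rightarrow> nat \<Rightarrow> 'p" where
  "lshift f n = (if n = 0 then 0 else f (n - 1))"

text \<open>Given f = sum_n lambda^n f_n, the element sum_n (-D-lambda)^n f_n of P[lambda]
(D acting on the coefficients); its coefficient of lambda^k is
sum_n (-1)^k (n choose k) (-D)^(n-k) f_n.\<close>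
definition subst_neg ::
  "('k::field \<Rightarrow> 'p::ab_group_add \<Rightarrow> 'p) \<Rightarrow> ('p \<Rightarrow> 'p) \<Rightarrow> (nat \<Rightarrow> 'p) \<Rightarrow> nat \<Rightarrow> 'p" where
  "subst_neg sc D f k =
     (\<Sum>n\<in>{n. f n \<noteq> 0}. sc ((-1) ^ k * of_nat (n choose k)) (((\<lambda>v. - D v) ^^ (n - k)) (f n)))"

text \<open>Coefficient of lambda^p mu^q in ((x_lambda y)_{lambda+mu} z), where the inner product
is mi and the outer one is mo:  sum_{j<=p} (j+q choose j) mo (mi x y (p-j)) z (j+q).\<close>
definition comp_sum ::
  "('k::field \<Rightarrow> 'p::ab_group_add \<Rightarrow> 'p) \<Rightarrow> ('p \<Rightarrow> 'p \<Rightarrow> nat \<Rightarrow> 'p) \<Rightarrow> ('p \<Rightarrow> 'p \<Rightarrow> nat \<Rightarrow> 'p)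
     \<Rightarrow> 'p \<Rightarrow> 'p \<Rightarrow> 'p \<Rightarrow> nat \<Rightarrow> nat \<Rightarrow> 'p" where
  "comp_sum sc mo mi x y z p q =
     (\<Sum>j\<le>p. sc (of_nat ((j + q) choose j)) (mo (mi x y (p - j)) z (j + q)))"

definition bilinear_on ::
  "('k::field \<Rightarrow> 'p::ab_group_add \<Rightarrow> 'p) \<Rightarrow> 'p set \<Rightarrow> 'p set \<Rightarrow> ('p \<Rightarrow> 'p \<Rightarrow> nat \<Rightarrow> 'p) \<Rightarrow> bool" where
  "bilinear_on sc A B m \<longleftrightarrow>
     (\<forall>x\<in>A. \<forall>x'\<in>A. \<forall>y\<in>B. \<forall>n. m (x + x') y n = m x y n + m x' y n) \<and>
     (\<forall>c. \<forall>x\<in>A. \<forall>y\<in>B. \<forall>n. m (sc c x) y n = sc c (m x y n)) \<and>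
     (\<forall>x\<in>A. \<forall>y\<in>B. \<forall>y'\<in>B. \<forall>n. m x (y + y') n = m x y n + m x y' n) \<and>
     (\<forall>c. \<forall>x\<in>A. \<forall>y\<in>B. \<forall>n. m x (sc c y) n = sc c (m x y n))"

definition lambda_product ::
  "('k::field \<Rightarrow> 'p::ab_group_add \<Rightarrow> 'p) \<Rightarrow> ('p \<Rightarrow> 'p) \<Rightarrow> ('p \<Rightarrow> 'p \<Rightarrow> nat \<Rightarrow> 'p) \<Rightarrow> bool" where
  "lambda_product sc D m \<longleftrightarrow>
     (\<forall>x y. fin_supp (m x y)) \<and> bilinear_on sc UNIV UNIV m \<and>
     (\<forall>x y n. m (D x) y n = - lshift (m x y) n) \<and>
     (\<forall>x y n. m x (D y) n = D (m x y n) + lshift (m x y) n)"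

definition H_module :: "('k::field \<Rightarrow> 'p::ab_group_add \<Rightarrow> 'p) \<Rightarrow> ('p \<Rightarrow> 'p) \<Rightarrow> bool" where
  "H_module sc D \<longleftrightarrow> vector_space sc \<and> Vector_Spaces.linear sc sc D"

definition poisson_conformal_algebra ::
  "('k::field \<Rightarrow> 'p::ab_group_add \<Rightarrow> 'p) \<Rightarrow> ('p \<Rightarrow> 'p)
     \<Rightarrow> ('p \<Rightarrow> 'p \<Rightarrow> nat \<Rightarrow> 'p) \<Rightarrow> ('p \<Rightarrow> 'p \<Rightarrow> nat \<Rightarrow> 'p) \<Rightarrow> bool" where
  "poisson_conformal_algebra sc D m br \<longleftrightarrow>
     H_module sc D \<and> lambda_product sc D m \<and> lambda_product sc D br \<and>
     \<comment> \<open>associativity: (x_lambda (y_mu z)) = ((x_lambda y)_{lambda+mu} z)\<close>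
     (\<forall>x y z p q. m x (m y z q) p = comp_sum sc m m x y z p q) \<and>
     \<comment> \<open>commutativity: (x_lambda y) = (y_{-d-lambda} x)\<close>
     (\<forall>x y. m x y = subst_neg sc D (m y x)) \<and>
     \<comment> \<open>skew-symmetry\<close>
     (\<forall>x y k. br x y k = - subst_neg sc D (br y x) k) \<and>
     \<comment> \<open>Jacobi identity\<close>
     (\<forall>x y z p q. br x (br y z q) p - br y (br x z p) q = comp_sum sc br br x y z p q) \<and>
     \<comment> \<open>Leibniz rule\<close>
     (\<forall>x y z p q. br x (m y z q) p = comp_sum sc m br x y z p q + m y (br x z p) q)"

definition H_submodule :: "('k::field \<Rightarrow> 'p::ab_group_add \<Rightarrow> 'p) \<Rightarrow> ('p \<Rightarrow> 'p) \<Rightarrow> 'p set \<Rightarrow> bool" where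
  "H_submodule sc D L \<longleftrightarrow> module.subspace sc L \<and> (\<forall>a\<in>L. D a \<in> L)"

text \<open>Conformal module (H-module (sc, D) = M) over the Lie conformal algebra (L, br),
with action act: act a u n is the coefficient of lambda^n in <a_lambda u>.\<close>
definition conformal_module ::
  "('k::field \<Rightarrow> 'p::ab_group_add \<Rightarrow> 'p) \<Rightarrow> ('p \<Rightarrow> 'p) \<Rightarrow> 'p set \<Rightarrow> ('p \<Rightarrow> 'p \<Rightarrow> nat \<Rightarrow> 'p)
     \<Rightarrow> ('p \<Rightarrow> 'p \<Rightarrow> nat \<Rightarrow> 'p) \<Rightarrow> bool" where
  "conformal_module sc D L br act \<longleftrightarrow>
     H_module sc D \<and>
     (\<forall>a\<in>L. \<forall>u. fin_supp (act a u)) \<and> bilinear_on sc L UNIV act \<and>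
     (\<forall>a\<in>L. \<forall>u n. act (D a) u n = - lshift (act a u) n) \<and>
     (\<forall>a\<in>L. \<forall>u n. act a (D u) n = D (act a u n) + lshift (act a u) n) \<and>
     (\<forall>a\<in>L. \<forall>b\<in>L. \<forall>u p q. act a (act b u q) p - act b (act a u p) q = comp_sum sc act br a b u p q)"

end

theory Submission
  imports Defs
begin


definition Fc :: "nat \<Rightarrow> nat \<Rightarrow> nat \<Rightarrow> 'k::comm_ring_1" where
  "Fc n p q = (\<Sum>i\<le>q. of_nat ((q - i + p) choose (q - i)) * (-1)^i * of_nat (n choose i))"

lemma Fc_rec: "Fc (Suc n) p (Suc q) = (Fc n p (Suc q) - Fc n p q :: 'k::comm_ring_1)"
  unfolding Fc_def
  apply (subst (1 2) sum.atMost_Suc_shift)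
  apply (simp add: algebra_simps sum.distrib sum_subtractf sum_negf)
  done

lemma Fc_0: "Fc n p 0 = (1::'k::comm_ring_1)"
  by (simp add: Fc_def)

lemma Fc_n0: "Fc 0 p q = (of_nat ((q + p) choose q) :: 'k::comm_ring_1)"
  unfolding Fc_def by (subst sum.atMost_shift) simp

lemma Fc_val: "n \<le> p + q \<Longrightarrow> Fc n p q = (if n \<le> p then of_nat ((p + q - n) choose q) else (0::'k::comm_ring_1))"
proof (induction n arbitrary: q)
  case 0
  then show ?case by (simp add: Fc_n0 add.commute)
next
  case (Suc n)
  show ?case
  proof (cases q)
    case 0
    then show ?thesis using Suc.prems by (simp add: Fc_0)
  next
    case (Suc q')
    have r: "Fc (Suc n) p q = (Fc n p (Suc q') - Fc n p q' :: 'k)" using Fc_rec Suc by simp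
    have h1: "Fc n p (Suc q') = (if n \<le> p then of_nat ((p + Suc q' - n) choose Suc q') else (0::'k))"
      using Suc.IH[of "Suc q'"] Suc.prems Suc by simp
    have h2: "Fc n p q' = (if n \<le> p then of_nat ((p + q' - n) choose q') else (0::'k))"
      using Suc.IH[of "q'"] Suc.prems Suc by simp
    show ?thesis
    proof (cases "Suc n \<le> p")
      case True
      define t where "t = p + q' - Suc n"
      have e1: "p + Suc q' - n = Suc (Suc t)" "p + q' - n = Suc t" "p + q - Suc n = Suc t"
        using True Suc by (auto simp: t_def)
      have "((p + Suc q' - n) choose Suc q') = ((p + q' - n) choose q') + ((p + q - Suc n) choose Suc q')"
        unfolding e1 by simp
      then show ?thesis using True r h1 h2 Suc by (simp add: algebra_simps)
    next
      case False
      then show ?thesis using r h1 h2 Suc by (cases "n = p") auto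
    qed
  qed
qed



locale hmod = vector_space sc for sc :: "'k::field_char_0 \<Rightarrow> 'p::ab_group_add \<Rightarrow> 'p" +
  fixes D :: "'p \<Rightarrow> 'p"
  assumes Dadd: "D (x + y) = D x + D y"
begin

lemma D0: "D 0 = 0"
  using Dadd[of 0 0] by simp

lemma Dpow0: "((\<lambda>v. - D v) ^^ r) 0 = 0"
  by (induction r) (auto simp: D0)

lemma subst_neg_ext:
  assumes "fin_supp g" "{n. g n \<noteq> 0} \<subseteq> {..N}"
  shows "subst_neg sc D g k = (\<Sum>n\<le>N. sc ((-1)^k * of_nat (n choose k)) (((\<lambda>v. - D v) ^^ (n - k)) (g n)))"
  unfolding subst_neg_def
  by (rule sum.mono_neutral_left) (use assms in \<open>auto simp: Dpow0\<close>)

lemma lsh: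
  fixes M :: "nat \<Rightarrow> nat \<Rightarrow> 'p"
  shows "(\<Sum>j\<le>p. sc (of_nat ((j+q) choose j)) (lshift (M (p-j)) (j+q)))
   = (if q = 0 then 0 else (\<Sum>j\<le>p. sc (of_nat ((j+(q-1)) choose j)) (M (p-j) (j+(q-1)))))
   + (if p = 0 then 0 else (\<Sum>j\<le>p-1. sc (of_nat ((j+q) choose j)) (M (p-1-j) (j+q))))"
proof (cases p)
  case 0 then show ?thesis by (cases q) (auto simp: lshift_def)
next
  case (Suc p')
  note pS = this
  show ?thesis
  proof (cases q)
    case 0
    show ?thesis unfolding pS 0
      by (subst sum.atMost_Suc_shift) (simp add: lshift_def)
  next
    case (Suc q')
    have "(\<Sum>j\<le>p. sc (of_nat ((j+q) choose j)) (lshift (M (p-j)) (j+q)))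
       = sc 1 (M (Suc p') q') + (\<Sum>j\<le>p'. sc (of_nat ((Suc j + q') choose Suc j)) (M (p' - j) (Suc j + q'))
              + sc (of_nat ((j + q) choose j)) (M (p' - j) (j + q)))"
      unfolding Suc pS
      by (subst sum.atMost_Suc_shift) (simp add: lshift_def scale_left_distrib algebra_simps)
    also have "\<dots> = (\<Sum>j\<le>p. sc (of_nat ((j+(q-1)) choose j)) (M (p-j) (j+(q-1))))
           + (\<Sum>j\<le>p-1. sc (of_nat ((j+q) choose j)) (M (p-1-j) (j+q)))"
      unfolding Suc pS
      by (subst sum.atMost_Suc_shift) (simp add: sum.distrib)
    finally show ?thesis using Suc \<open>p = Suc p'\<close> by simp
  qed
qed

context
  fixes mo :: "'p \<Rightarrow> 'p \<Rightarrow> nat \<Rightarrow> 'p"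
  assumes madd: "\<And>x x' z n. mo (x + x') z n = mo x z n + mo x' z n"
    and msc: "\<And>c x z n. mo (sc c x) z n = sc c (mo x z n)"
    and mD: "\<And>x z n. mo (D x) z n = - lshift (mo x z) n"
begin

lemma mo0: "mo 0 z n = 0"
  using madd[of 0 0 z n] by simp

lemma moneg: "mo (- x) z n = - mo x z n"
  using madd[of x "-x" z n] by (simp add: mo0 eq_neg_iff_add_eq_0 add.commute)

lemma mosum: "mo (\<Sum>i\<in>A. f i) z n = (\<Sum>i\<in>A. mo (f i) z n)"
  by (induction A rule: infinite_finite_induct) (auto simp: mo0 madd)

lemma mopow: "mo (((\<lambda>v. - D v) ^^ r) x) z N = (if r \<le> N then mo x z (N - r) else 0)"
proof (induction r arbitrary: N)
  case 0 then show ?case by simp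
next
  case (Suc r)
  have "mo (((\<lambda>v. - D v) ^^ Suc r) x) z N = lshift (mo (((\<lambda>v. - D v) ^^ r) x) z) N"
    by (simp add: moneg mD)
  then show ?case using Suc.IH by (auto simp: lshift_def)
qed

lemma swap_sn:
  assumes fg: "fin_supp g"
  shows "(\<Sum>j\<le>q. sc (of_nat ((j+p) choose j)) (mo (subst_neg sc D g (q-j)) z (j+p)))
       = (\<Sum>j\<le>p. sc (of_nat ((j+q) choose j)) (mo (g (p-j)) z (j+q)))"
proof -
  obtain K where K: "{n. g n \<noteq> 0} \<subseteq> {..<K}"
  proof -
    obtain m where "\<forall>n\<in>{n. g n \<noteq> 0}. n \<le> m" using fg finite_nat_set_iff_bounded_le unfolding fin_supp_def by blast
    then have "{n. g n \<noteq> 0} \<subseteq> {..<Suc m}" by auto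
    then show ?thesis using that by blast
  qed
  define N where "N = K + p + q"
  have SN: "{n. g n \<noteq> 0} \<subseteq> {..N}" using K by (auto simp: N_def)
  define T where "T n = (if n \<le> p + q then mo (g n) z (p + q - n) else 0)" for n
  define G where "G n = (if n \<le> p then of_nat ((p + q - n) choose q) else (0::'k))" for n
  have "(\<Sum>j\<le>q. sc (of_nat ((j+p) choose j)) (mo (subst_neg sc D g (q-j)) z (j+p)))
     = (\<Sum>j\<le>q. \<Sum>n\<le>N. sc (of_nat ((j+p) choose j) * ((-1)^(q-j) * of_nat (n choose (q-j))))
            (mo (((\<lambda>v. - D v) ^^ (n - (q-j))) (g n)) z (j+p)))"
    by (simp add: subst_neg_ext[OF fg SN] mosum msc scale_sum_right)
  also have "\<dots> = (\<Sum>j\<le>q. \<Sum>n\<le>N. sc (of_nat ((j+p) choose j) * ((-1)^(q-j) * of_nat (n choose (q-j)))) (T n))"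
  proof (intro sum.cong refl)
    fix j n assume j: "j \<in> {..q}"
    show "sc (of_nat ((j+p) choose j) * ((-1)^(q-j) * of_nat (n choose (q-j))))
            (mo (((\<lambda>v. - D v) ^^ (n - (q-j))) (g n)) z (j+p))
        = sc (of_nat ((j+p) choose j) * ((-1)^(q-j) * of_nat (n choose (q-j)))) (T n)"
    proof (cases "n < q - j")
      case True then show ?thesis by simp
    next
      case False
      then have "mo (((\<lambda>v. - D v) ^^ (n - (q-j))) (g n)) z (j+p) = T n"
        using j by (auto simp: mopow T_def)
      then show ?thesis by simp
    qed
  qed
  also have "\<dots> = (\<Sum>n\<le>N. \<Sum>j\<le>q. sc (of_nat ((j+p) choose j) * ((-1)^(q-j) * of_nat (n choose (q-j)))) (T n))"
    by (rule sum.swap)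
  also have "\<dots> = (\<Sum>n\<le>N. sc (\<Sum>j\<le>q. of_nat ((j+p) choose j) * ((-1)^(q-j) * of_nat (n choose (q-j)))) (T n))"
    by (simp add: scale_sum_left)
  also have "\<dots> = (\<Sum>n\<le>N. sc (G n) (T n))"
  proof (intro sum.cong refl)
    fix n
    show "sc (\<Sum>j\<le>q. of_nat ((j+p) choose j) * ((-1)^(q-j) * of_nat (n choose (q-j)))) (T n) = sc (G n) (T n)"
    proof (cases "n \<le> p + q")
      case True
      have "(\<Sum>j\<le>q. of_nat ((j+p) choose j) * ((-1)^(q-j) * of_nat (n choose (q-j))))
          = (\<Sum>i\<le>q. of_nat ((q - i + p) choose (q - i)) * (-1)^i * of_nat (n choose i) :: 'k)"
        unfolding atLeast0AtMost[symmetric]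
        apply (subst sum.atLeastAtMost_rev)
        apply (intro sum.cong refl)
        apply (auto simp: algebra_simps)
        done
      also have "\<dots> = G n" using Fc_val[OF True, where 'k='k] by (simp add: Fc_def G_def)
      finally show ?thesis by simp
    next
      case False then show ?thesis by (simp add: T_def)
    qed
  qed
  also have "\<dots> = (\<Sum>n\<le>p. sc (G n) (T n))"
    by (rule sum.mono_neutral_right) (auto simp: N_def G_def)
  also have "\<dots> = (\<Sum>j\<le>p. sc (of_nat ((j+q) choose j)) (mo (g (p-j)) z (j+q)))"
    unfolding atLeast0AtMost[symmetric]
    apply (subst (2) sum.atLeastAtMost_rev)
    apply (intro sum.cong refl)
    apply (auto simp: G_def T_def)
    apply (subst binomial_symmetric[of q]; simp)
    done
  finally show ?thesis .
qed

end
end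


lemma fin_supp_act: "fin_supp (f :: nat \<Rightarrow> 'p::ab_group_add) \<Longrightarrow> fin_supp g \<Longrightarrow> fin_supp (\<lambda>n. f n + lshift g n)"
proof -
  assume f: "fin_supp f" and g: "fin_supp g"
  have "{n. f n + lshift g n \<noteq> 0} \<subseteq> {n. f n \<noteq> 0} \<union> Suc ` {n. g n \<noteq> 0}"
  proof
    fix n assume "n \<in> {n. f n + lshift g n \<noteq> 0}"
    then have h: "f n + lshift g n \<noteq> 0" by simp
    show "n \<in> {n. f n \<noteq> 0} \<union> Suc ` {n. g n \<noteq> 0}"
    proof (cases "f n = 0")
      case True
      then have "n \<noteq> 0" "g (n - 1) \<noteq> 0" using h by (auto simp: lshift_def split: if_splits)
      then have "n = Suc (n - 1)" "n - 1 \<in> {n. g n \<noteq> 0}" by auto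
      then show ?thesis by blast
    qed simp
  qed
  then show ?thesis unfolding fin_supp_def by (rule finite_subset) (use f g in \<open>auto simp: fin_supp_def\<close>)
qed

theorem mainTheorem5:
  fixes sc :: "'k::field_char_0 \<Rightarrow> 'p::ab_group_add \<Rightarrow> 'p"
    and D :: "'p \<Rightarrow> 'p"
    and m br :: "'p \<Rightarrow> 'p \<Rightarrow> nat \<Rightarrow> 'p"
    and L :: "'p set"
  assumes "poisson_conformal_algebra sc D m br"
    and "H_submodule sc D L"
    and "\<forall>a\<in>L. \<forall>b\<in>L. \<forall>n. br a b n \<in> L"
  shows "conformal_module sc D L br (\<lambda>a u n. br a u n + lshift (m a u) n)"
proof -
  note P = assms(1)[unfolded poisson_conformal_algebra_def H_module_def lambda_product_def bilinear_on_def]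
  have vs: "vector_space sc" and lin: "Vector_Spaces.linear sc sc D"
    using assms(1) unfolding poisson_conformal_algebra_def H_module_def by blast+
  interpret vector_space sc by (rule vs)
  interpret ld: Vector_Spaces.linear sc sc D by (rule lin)
  interpret hmod sc D by unfold_locales (rule ld.add)
  note P0 = assms(1)[unfolded poisson_conformal_algebra_def]
  note lm = P0[THEN conjunct2, THEN conjunct1, unfolded lambda_product_def bilinear_on_def]
  note lb = P0[THEN conjunct2, THEN conjunct2, THEN conjunct1, unfolded lambda_product_def bilinear_on_def]
  note assoc0 = P0[THEN conjunct2, THEN conjunct2, THEN conjunct2, THEN conjunct1]
  note comm0 = P0[THEN conjunct2, THEN conjunct2, THEN conjunct2, THEN conjunct2, THEN conjunct1]
  note skew0 = P0[THEN conjunct2, THEN conjunct2, THEN conjunct2, THEN conjunct2, THEN conjunct2, THEN conjunct1]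
  note jac0 = P0[THEN conjunct2, THEN conjunct2, THEN conjunct2, THEN conjunct2, THEN conjunct2, THEN conjunct2, THEN conjunct1]
  note leib0 = P0[THEN conjunct2, THEN conjunct2, THEN conjunct2, THEN conjunct2, THEN conjunct2, THEN conjunct2, THEN conjunct2]
  note mfin0 = lm[THEN conjunct1]
  note ma1 = lm[THEN conjunct2, THEN conjunct1, THEN conjunct1]
  note ms1 = lm[THEN conjunct2, THEN conjunct1, THEN conjunct2, THEN conjunct1]
  note ma2 = lm[THEN conjunct2, THEN conjunct1, THEN conjunct2, THEN conjunct2, THEN conjunct1]
  note ms2 = lm[THEN conjunct2, THEN conjunct1, THEN conjunct2, THEN conjunct2, THEN conjunct2]
  note mD10 = lm[THEN conjunct2, THEN conjunct2, THEN conjunct1]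
  note mD20 = lm[THEN conjunct2, THEN conjunct2, THEN conjunct2]
  note brfin0 = lb[THEN conjunct1]
  note ba1 = lb[THEN conjunct2, THEN conjunct1, THEN conjunct1]
  note bs1 = lb[THEN conjunct2, THEN conjunct1, THEN conjunct2, THEN conjunct1]
  note ba2 = lb[THEN conjunct2, THEN conjunct1, THEN conjunct2, THEN conjunct2, THEN conjunct1]
  note bs2 = lb[THEN conjunct2, THEN conjunct1, THEN conjunct2, THEN conjunct2, THEN conjunct2]
  note bD10 = lb[THEN conjunct2, THEN conjunct2, THEN conjunct1]
  note bD20 = lb[THEN conjunct2, THEN conjunct2, THEN conjunct2]
  note mfin = mfin0[rule_format] and brfin = brfin0[rule_format]
  note madd1 = ma1[rule_format, OF UNIV_I UNIV_I UNIV_I]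
  note msc1 = ms1[rule_format, OF UNIV_I UNIV_I]
  note madd2 = ma2[rule_format, OF UNIV_I UNIV_I UNIV_I]
  note msc2 = ms2[rule_format, OF UNIV_I UNIV_I]
  note mD1 = mD10[rule_format] and mD2 = mD20[rule_format]
  note badd1 = ba1[rule_format, OF UNIV_I UNIV_I UNIV_I]
  note bsc1 = bs1[rule_format, OF UNIV_I UNIV_I]
  note badd2 = ba2[rule_format, OF UNIV_I UNIV_I UNIV_I]
  note bsc2 = bs2[rule_format, OF UNIV_I UNIV_I]
  note bD1 = bD10[rule_format] and bD2 = bD20[rule_format]
  note assoc = assoc0[rule_format] and comm = comm0[rule_format] and skew = skew0[rule_format]
    and jac = jac0[rule_format] and leib = leib0[rule_format]
  have m02: "\<And>x n. m x 0 n = 0" using madd2[of _ 0 0] by simp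
  have b02: "\<And>x n. br x 0 n = 0" using badd2[of _ 0 0] by simp
  have mneg1: "\<And>x z n. m (- x) z n = - m x z n"
    by (rule moneg[OF madd1 msc1 mD1])
  have expand: "\<And>x y u p q. br x (br y u q + lshift (m y u) q) p + lshift (m x (br y u q + lshift (m y u) q)) p
     = br x (br y u q) p + (if q = 0 then 0 else br x (m y u (q-1)) p) + (if p = 0 then 0 else m x (br y u q) (p-1))
       + (if p = 0 \<or> q = 0 then 0 else m x (m y u (q-1)) (p-1))"
    by (simp add: lshift_def badd2 madd2 b02 m02 add.assoc)
  have rhs: "comp_sum sc (\<lambda>a u n. br a u n + lshift (m a u) n) br a b u p q
     = comp_sum sc br br a b u p q + ((if q = 0 then 0 else comp_sum sc m br a b u p (q-1))
        + (if p = 0 then 0 else comp_sum sc m br a b u (p-1) q))" for a b u p q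
    by (simp only: comp_sum_def scale_right_distrib sum.distrib lsh[where M="\<lambda>i. m (br a b i) u" and p=p and q=q])
  have La: "\<And>a b u p q. comp_sum sc m br b a u q p = - comp_sum sc m br a b u p q"
  proof -
    fix a b u p q
    have "comp_sum sc m br b a u q p = - (\<Sum>j\<le>q. sc (of_nat ((j+p) choose j)) (m (subst_neg sc D (br a b) (q-j)) u (j+p)))"
      unfolding comp_sum_def by (simp add: skew[of b a] mneg1 sum_negf)
    also have "\<dots> = - comp_sum sc m br a b u p q"
      unfolding comp_sum_def by (subst swap_sn[OF madd1 msc1 mD1 brfin]) (rule refl)
    finally show "comp_sum sc m br b a u q p = - comp_sum sc m br a b u p q" .
  qed
  have Cm: "\<And>a b u p q. m a (m b u q) p = m b (m a u p) q"
  proof -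
    fix a b u p q
    have "m b (m a u p) q = (\<Sum>j\<le>q. sc (of_nat ((j+p) choose j)) (m (subst_neg sc D (m a b) (q-j)) u (j+p)))"
      unfolding assoc comp_sum_def by (simp add: comm[of b a])
    also have "\<dots> = m a (m b u q) p"
      unfolding assoc comp_sum_def by (subst swap_sn[OF madd1 msc1 mD1 mfin]) (rule refl)
    finally show "m a (m b u q) p = m b (m a u p) q" by simp
  qed
  have main: "br a (br b u q + lshift (m b u) q) p + lshift (m a (br b u q + lshift (m b u) q)) p
     - (br b (br a u p + lshift (m a u) p) q + lshift (m b (br a u p + lshift (m a u) p)) q)
     = comp_sum sc (\<lambda>a u n. br a u n + lshift (m a u) n) br a b u p q" for a b u p q
  proof -
    have J: "br a (br b u q) p - br b (br a u p) q = comp_sum sc br br a b u p q" by (rule jac)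
    have Lb: "q \<noteq> 0 \<Longrightarrow> br a (m b u (q-1)) p = comp_sum sc m br a b u p (q-1) + m b (br a u p) (q-1)"
      by (rule leib)
    have La': "p \<noteq> 0 \<Longrightarrow> br b (m a u (p-1)) q = - comp_sum sc m br a b u (p-1) q + m a (br b u q) (p-1)"
      using leib[of b a u "p-1" q] La[of a b u "p-1" q] by simp
    show ?thesis
      unfolding expand[of a b] expand[of b a] rhs
      using J Lb La' Cm[of a b u "q-1" "p-1"]
      by (cases "p = 0"; cases "q = 0"; simp add: algebra_simps)
  qed
  show ?thesis
    unfolding conformal_module_def
  proof (intro conjI ballI allI)
    show "H_module sc D" using vs lin by (simp add: H_module_def)
  next
    fix a u assume "a \<in> L"
    show "fin_supp (\<lambda>n. br a u n + lshift (m a u) n)" by (rule fin_supp_act[OF brfin mfin])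
  next
    show "bilinear_on sc L UNIV (\<lambda>a u n. br a u n + lshift (m a u) n)"
      unfolding bilinear_on_def
      by (simp add: lshift_def badd1 madd1 bsc1 msc1 badd2 madd2 bsc2 msc2 scale_right_distrib)
  next
    fix a u n assume "a \<in> L"
    show "br (D a) u n + lshift (m (D a) u) n = - lshift (\<lambda>n. br a u n + lshift (m a u) n) n"
      by (simp add: lshift_def bD1 mD1)
  next
    fix a u n assume "a \<in> L"
    show "br a (D u) n + lshift (m a (D u)) n = D (br a u n + lshift (m a u) n) + lshift (\<lambda>n. br a u n + lshift (m a u) n) n"
      by (simp add: lshift_def bD2 mD2 ld.add D0)
  next
    fix a b u p q assume "a \<in> L" "b \<in> L"
    show "br a (br b u q + lshift (m b u) q) p + lshift (m a (br b u q + lshift (m b u) q)) p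
     - (br b (br a u p + lshift (m a u) p) q + lshift (m b (br a u p + lshift (m a u) p)) q)
     = comp_sum sc (\<lambda>a u n. br a u n + lshift (m a u) n) br a b u p q"
      by (rule main)
  qed
qed

end
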